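(* Let $(a,\alpha)\neq(0,0)$. There exist $\delta_0>0$ and $c>0$ such that for all $N$, all $L\le\delta_0N$, all $\mathscr P\subseteq\{1,\dots,N-1\}$ with $\min\mathscr P<L$, and all $\phi:\{-1,\dots,N+1\}\to\mathbb R$ with $\phi(-1)=N^2a-N\alpha$, $\phi(0)=N^2a$ and $\phi(k)=0$ for $k\in\mathscr P$, one has $\mathcal H_{[-1,N+1]}(\phi)\ge c\,N^2/L$.
   Context: $\mathcal H_{[-1,N+1]}(\phi)=\sum_{k=0}^{N}\frac12(\phi_{k+1}+\phi_{k-1}-2\phi_k)^2$. *)

theory Defs
  imports Complex_Main
begin

text \<open>Energy H_{[-1,N+1]}(phi) = sum_{k=0}^{N} (1/2) (phi(k+1) + phi(k-1) - 2 phi(k))^2,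
  for phi defined on the integers (only values on {-1..N+1} matter).\<close>
definition H :: "nat \<Rightarrow> (int \<Rightarrow> real) \<Rightarrow> real" where
  "H N \<phi> = (\<Sum>k\<in>{0..int N}. (1/2) * (\<phi> (k+1) + \<phi> (k-1) - 2 * \<phi> k)^2)"

end

theory Submission
  imports Defs "HOL-Analysis.Convex"
begin

definition dd :: "(int \<Rightarrow> real) \<Rightarrow> int \<Rightarrow> real" where
  "dd \<phi> k = \<phi> (k+1) + \<phi> (k-1) - 2 * \<phi> k"

lemma diff_formula:
  "\<phi> (int j) - \<phi> (int j - 1) = (\<phi> 0 - \<phi> (-1)) + (\<Sum>i<j. dd \<phi> (int i))"
proof (induction j)
  case 0 then show ?case by simp
next
  case (Suc j)
  have "\<phi> (int (Suc j)) - \<phi> (int (Suc j) - 1) = (\<phi> (int j) - \<phi> (int j - 1)) + dd \<phi> (int j)"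
    by (simp add: dd_def algebra_simps)
  then show ?case using Suc by simp
qed

lemma val_formula:
  "\<phi> (int p) = \<phi> 0 + real p * (\<phi> 0 - \<phi> (-1)) + (\<Sum>i<p. real (p - i) * dd \<phi> (int i))"
proof (induction p)
  case 0 then show ?case by simp
next
  case (Suc p)
  have e: "(\<Sum>i<Suc p. real (Suc p - i) * dd \<phi> (int i))
        = (\<Sum>i<p. real (p - i) * dd \<phi> (int i)) + (\<Sum>i<Suc p. dd \<phi> (int i))"
  proof -
    have "(\<Sum>i<Suc p. real (Suc p - i) * dd \<phi> (int i))
        = (\<Sum>i<Suc p. real (p - i) * dd \<phi> (int i) + dd \<phi> (int i))"
      by (rule sum.cong) (auto simp: Suc_diff_le algebra_simps)
    also have "\<dots> = (\<Sum>i<p. real (p - i) * dd \<phi> (int i)) + (\<Sum>i<Suc p. dd \<phi> (int i))"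
      by (simp add: sum.distrib)
    finally show ?thesis .
  qed
  have "\<phi> (int (Suc p)) = \<phi> (int p) + (\<phi> (int (Suc p)) - \<phi> (int (Suc p) - 1))" by simp
  also have "\<dots> = \<phi> (int p) + (\<phi> 0 - \<phi> (-1)) + (\<Sum>i<Suc p. dd \<phi> (int i))"
    using diff_formula[of \<phi> "Suc p"] by simp
  finally show ?case using Suc e by (simp add: algebra_simps)
qed

lemma key:
  fixes \<phi> :: "int \<Rightarrow> real" and p N :: nat
  assumes "p \<le> N" "\<phi> (int p) = 0"
  shows "(\<phi> 0 + real p * (\<phi> 0 - \<phi> (-1)))^2 \<le> real p ^ 3 * (2 * H N \<phi>)"
proof -
  let ?S = "\<Sum>i<p. real (p - i) * dd \<phi> (int i)"
  have eq: "\<phi> 0 + real p * (\<phi> 0 - \<phi> (-1)) = - ?S" using val_formula[of \<phi> p] assms(2) by simp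
  have cs: "?S^2 \<le> (\<Sum>i<p. (real (p - i))^2) * (\<Sum>i<p. (dd \<phi> (int i))^2)"
    by (rule Cauchy_Schwarz_ineq_sum)
  have w: "(\<Sum>i<p. (real (p - i))^2) \<le> real p ^ 3"
  proof -
    have "(\<Sum>i<p. (real (p - i))^2) \<le> (\<Sum>i<p. (real p)^2)"
      by (rule sum_mono) (auto intro!: power_mono)
    also have "\<dots> = real p ^ 3" by (simp add: power2_eq_square power3_eq_cube)
    finally show ?thesis .
  qed
  have hd: "(\<Sum>i<p. (dd \<phi> (int i))^2) \<le> 2 * H N \<phi>"
  proof -
    have "(\<Sum>i<p. (dd \<phi> (int i))^2) = (\<Sum>k\<in>int ` {..<p}. (dd \<phi> k)^2)"
      by (subst sum.reindex) (auto simp: inj_on_def)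
    also have "\<dots> \<le> (\<Sum>k\<in>{0..int N}. (dd \<phi> k)^2)"
      by (rule sum_mono2) (use assms(1) in force)+
    also have "\<dots> = 2 * H N \<phi>"
      by (simp add: H_def dd_def sum_distrib_left)
    finally show ?thesis .
  qed
  have nn: "0 \<le> (\<Sum>i<p. (dd \<phi> (int i))^2)" by (simp add: sum_nonneg)
  have "?S^2 \<le> real p ^ 3 * (\<Sum>i<p. (dd \<phi> (int i))^2)"
    using cs mult_right_mono[OF w nn] by linarith
  also have "\<dots> \<le> real p ^ 3 * (2 * H N \<phi>)" using hd by (simp add: mult_left_mono)
  finally show ?thesis using eq by simp
qed

theorem lemma3p13:
  fixes a \<alpha> :: real
  assumes "(a, \<alpha>) \<noteq> (0, 0)"
  shows "\<exists>\<delta>0 > 0. \<exists>c > 0. \<forall>(N::nat) (L::real) (P::int set) (\<phi>::int \<Rightarrow> real).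
           L \<le> \<delta>0 * real N \<longrightarrow>
           P \<subseteq> {1..int N - 1} \<longrightarrow> P \<noteq> {} \<longrightarrow> real_of_int (Min P) < L \<longrightarrow>
           \<phi> (-1) = (real N)^2 * a - real N * \<alpha> \<longrightarrow>
           \<phi> 0 = (real N)^2 * a \<longrightarrow>
           (\<forall>k\<in>P. \<phi> k = 0) \<longrightarrow>
           H N \<phi> \<ge> c * (real N)^2 / L"
proof -
  have core: "\<exists>p::nat. 1 \<le> real p \<and> real p < L \<and>
      ((real N)^2 * a + real p * real N * \<alpha>)^2 \<le> real p ^ 3 * (2 * H N \<phi>)"
    if "P \<subseteq> {1..int N - 1}" "P \<noteq> {}" "real_of_int (Min P) < L"
       "\<phi> (-1) = (real N)^2 * a - real N * \<alpha>" "\<phi> 0 = (real N)^2 * a" "\<forall>k\<in>P. \<phi> k = 0"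
    for N L P \<phi>
  proof -
    have fin: "finite P" using that(1) finite_subset by blast
    have mP: "Min P \<in> P" using fin that(2) by simp
    then have r: "1 \<le> Min P" "Min P \<le> int N - 1" using that(1) by auto
    define p where "p = nat (Min P)"
    have pi: "int p = Min P" using r by (simp add: p_def)
    have "\<phi> (int p) = 0" using pi mP that(6) by simp
    moreover have "p \<le> N" using r pi by linarith
    ultimately have k: "(\<phi> 0 + real p * (\<phi> 0 - \<phi> (-1)))^2 \<le> real p ^ 3 * (2 * H N \<phi>)"
      using key by blast
    have "\<phi> 0 + real p * (\<phi> 0 - \<phi> (-1)) = (real N)^2 * a + real p * real N * \<alpha>"
      unfolding that(4,5) by (simp add: algebra_simps)
    moreover have "1 \<le> real p" using r pi by linarith
    moreover have "real p < L" using that(3) pi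
      by (metis of_int_of_nat_eq)
    ultimately show ?thesis using k by metis
  qed
  have Hnn: "0 \<le> H N \<phi>" for N \<phi> unfolding H_def by (intro sum_nonneg) simp
  show ?thesis
  proof (cases "a = 0")
    case True
    then have al: "\<alpha> \<noteq> 0" using assms by simp
    have main: "\<forall>(N::nat) (L::real) (P::int set) (\<phi>::int \<Rightarrow> real).
           L \<le> 1 * real N \<longrightarrow>
           P \<subseteq> {1..int N - 1} \<longrightarrow> P \<noteq> {} \<longrightarrow> real_of_int (Min P) < L \<longrightarrow>
           \<phi> (-1) = (real N)^2 * a - real N * \<alpha> \<longrightarrow>
           \<phi> 0 = (real N)^2 * a \<longrightarrow>
           (\<forall>k\<in>P. \<phi> k = 0) \<longrightarrow>
           H N \<phi> \<ge> \<alpha>^2/2 * (real N)^2 / L"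
    proof (intro allI impI)
      fix N L P \<phi>
      assume h: "L \<le> 1 * real N" "P \<subseteq> {1..int N - 1}" "P \<noteq> {}" "real_of_int (Min P) < L"
        "\<phi> (-1) = (real N)^2 * a - real N * \<alpha>" "\<phi> 0 = (real N)^2 * a" "\<forall>k\<in>P. \<phi> k = 0"
      obtain p :: nat where p: "1 \<le> real p" "real p < L"
        "((real N)^2 * a + real p * real N * \<alpha>)^2 \<le> real p ^ 3 * (2 * H N \<phi>)"
        using core[OF h(2-7)] by blast
      have "real p ^ 2 * ((real N)^2 * \<alpha>^2) \<le> real p ^ 2 * (real p * (2 * H N \<phi>))"
        using p(3) True by (simp add: power_mult_distrib power2_eq_square power3_eq_cube algebra_simps)
      then have "(real N)^2 * \<alpha>^2 \<le> real p * (2 * H N \<phi>)"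
        using p(1) by (simp add: mult_le_cancel_left)
      also have "\<dots> \<le> L * (2 * H N \<phi>)" using p(2) Hnn[of N \<phi>] by (intro mult_right_mono) auto
      finally have "(real N)^2 * \<alpha>^2 \<le> L * (2 * H N \<phi>)" .
      moreover have "L > 0" using p by linarith
      ultimately show "\<alpha>^2/2 * (real N)^2 / L \<le> H N \<phi>"
        by (simp add: field_simps)
    qed
    show ?thesis
      apply (rule exI[of _ 1]) apply (rule conjI, simp)
      apply (rule exI[of _ "\<alpha>^2/2"]) using al main by auto
  next
    case False
    define d where "d = \<bar>a\<bar> / (2 * \<bar>\<alpha>\<bar> + 1)"
    have dpos: "d > 0" using False by (simp add: d_def)
    have dal: "d * \<bar>\<alpha>\<bar> \<le> \<bar>a\<bar> / 2"
    proof -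
      have "d * \<bar>\<alpha>\<bar> = \<bar>a\<bar> * \<bar>\<alpha>\<bar> / (2 * \<bar>\<alpha>\<bar> + 1)" by (simp add: d_def)
      also have "\<dots> \<le> \<bar>a\<bar> / 2" by (simp add: field_simps mult_left_mono)
      finally show ?thesis .
    qed
    have main: "\<forall>(N::nat) (L::real) (P::int set) (\<phi>::int \<Rightarrow> real).
           L \<le> d * real N \<longrightarrow>
           P \<subseteq> {1..int N - 1} \<longrightarrow> P \<noteq> {} \<longrightarrow> real_of_int (Min P) < L \<longrightarrow>
           \<phi> (-1) = (real N)^2 * a - real N * \<alpha> \<longrightarrow>
           \<phi> 0 = (real N)^2 * a \<longrightarrow>
           (\<forall>k\<in>P. \<phi> k = 0) \<longrightarrow>
           H N \<phi> \<ge> a^2 / (8 * d^2) * (real N)^2 / L"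
    proof (intro allI impI)
      fix N L P \<phi>
      assume h: "L \<le> d * real N" "P \<subseteq> {1..int N - 1}" "P \<noteq> {}" "real_of_int (Min P) < L"
        "\<phi> (-1) = (real N)^2 * a - real N * \<alpha>" "\<phi> 0 = (real N)^2 * a" "\<forall>k\<in>P. \<phi> k = 0"
      obtain p :: nat where p: "1 \<le> real p" "real p < L"
        "((real N)^2 * a + real p * real N * \<alpha>)^2 \<le> real p ^ 3 * (2 * H N \<phi>)"
        using core[OF h(2-7)] by blast
      define n where "n = real N"
      have Lp: "L > 0" using p by linarith
      have n0: "n \<ge> 0" by (simp add: n_def)
      have pn: "real p * n * \<bar>\<alpha>\<bar> \<le> n^2 * \<bar>a\<bar> / 2"
      proof -
        have "real p * n * \<bar>\<alpha>\<bar> \<le> (d * n) * n * \<bar>\<alpha>\<bar>"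
          using p(2) h(1) n0 unfolding n_def[symmetric]
          by (intro mult_right_mono) auto
        also have "\<dots> = n^2 * (d * \<bar>\<alpha>\<bar>)" by (simp add: power2_eq_square)
        also have "\<dots> \<le> n^2 * (\<bar>a\<bar>/2)" using dal by (intro mult_left_mono) auto
        finally show ?thesis by simp
      qed
      have X: "\<bar>n^2 * a + real p * n * \<alpha>\<bar> \<ge> n^2 * \<bar>a\<bar> / 2"
      proof -
        have "\<bar>real p * n * \<alpha>\<bar> = real p * n * \<bar>\<alpha>\<bar>" using n0 by (simp add: abs_mult)
        moreover have "\<bar>n^2 * a\<bar> = n^2 * \<bar>a\<bar>" by (simp add: abs_mult)
        ultimately show ?thesis using pn by linarith
      qed
      have X2: "(n^2 * \<bar>a\<bar> / 2)^2 \<le> real p ^ 3 * (2 * H N \<phi>)"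
      proof -
        have "(n^2 * \<bar>a\<bar> / 2)^2 \<le> (n^2 * a + real p * n * \<alpha>)^2"
          using X n0 by (metis abs_le_square_iff abs_of_nonneg divide_nonneg_nonneg zero_le_numeral
              zero_le_power2 abs_ge_zero mult_nonneg_nonneg)
        then show ?thesis using p(3) unfolding n_def by linarith
      qed
      have p3: "real p ^ 3 * (2 * H N \<phi>) \<le> L ^ 3 * (2 * H N \<phi>)"
        using p Hnn[of N \<phi>] by (intro mult_right_mono power_mono) auto
      have nL: "L^2 \<le> (d * n)^2" using h(1) Lp unfolding n_def by (intro power_mono) auto
      have A: "n^4 * a^2 \<le> 8 * L^3 * H N \<phi>"
      proof -
        have "(n^2 * \<bar>a\<bar> / 2)^2 = n^4 * a^2 / 4"
          by (simp add: power_mult_distrib power_divide flip: power_mult)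
        then show ?thesis using X2 p3 by linarith
      qed
      have "L^2 * a^2 * n^2 \<le> d^2 * n^2 * a^2 * n^2"
        using nL by (intro mult_right_mono) (auto simp: power_mult_distrib)
      also have "\<dots> = d^2 * (n^4 * a^2)" by (simp add: power2_eq_square power4_eq_xxxx)
      also have "\<dots> \<le> d^2 * (8 * L^3 * H N \<phi>)" using A by (intro mult_left_mono) auto
      finally have B: "L^2 * (a^2 * n^2) \<le> L^2 * (8 * d^2 * L * H N \<phi>)"
        by (simp add: power2_eq_square power3_eq_cube algebra_simps)
      have "a^2 * n^2 \<le> 8 * d^2 * L * H N \<phi>"
        using B Lp by (simp add: mult_le_cancel_left)
      then show "a^2 / (8 * d^2) * (real N)^2 / L \<le> H N \<phi>"
        using Lp dpos unfolding n_def by (simp add: field_simps)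
    qed
    show ?thesis
      apply (rule exI[of _ d]) apply (rule conjI, use dpos in simp)
      apply (rule exI[of _ "a^2 / (8 * d^2)"]) using dpos False main by auto
  qed
qed

end
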